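(* Assume Assumption A. Let $(\sigma_i)_{i\in\mathbb{N}}$ be i.i.d. copies of $\sigma_0$ and $i_x:=\min\{i:\sigma_i>x\}$. Then there exists $c>0$ such that for all sufficiently large $x$, \[ \mathbf{E}\big[\sigma_{i_x}^{-1}\big]<c\,x^{-1}g(x). \]
   Context: $\sigma_0$ is a strictly positive random variable under $\mathbf{P}$ and $L(u):=1/\mathbf{P}(\sigma_0>u)$ satisfies $\lim_{u\to\infty}L(uv)/L(u)=1$ for all $v>0$. Assumption A: $L$ is continuous, and there exist functions $g,k$ with $g(u)\to0$ as $u\to\infty$, $g$ eventually monotone decreasing, such that $\lim_{u\to\infty}\big(L(uv)/L(u)-1\big)/g(u)=k(v)$ for every $v>0$, where there exists $v$ with $k(v)\neq0$ and $k(uv)\ne k(u)$ for all $u>0$. *)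

theory Defs
  imports "HOL-Probability.Probability"
begin

definition tailL :: "'a measure \<Rightarrow> ('a \<Rightarrow> real) \<Rightarrow> real \<Rightarrow> real" where
  "tailL M X u = 1 / measure M {\<omega> \<in> space M. X \<omega> > u}"

definition first_exceed :: "(nat \<Rightarrow> 'a \<Rightarrow> real) \<Rightarrow> real \<Rightarrow> 'a \<Rightarrow> nat" where
  "first_exceed \<sigma> x \<omega> = (LEAST i. \<sigma> i \<omega> > x)"

end

theory Submission imports Defs begin

lemma (in prob_space) ident_prob:
  assumes rv: "\<And>i. \<sigma> i \<in> borel_measurable M"
    and ident: "\<And>i. distr M borel (\<sigma> i) = distr M borel (\<sigma> 0)"
    and B: "B \<in> sets borel"
  shows "prob (\<sigma> j -` B \<inter> space M) = prob (\<sigma> 0 -` B \<inter> space M)"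
  by (metis B ident measure_distr rv)

lemma (in prob_space) indep_prefix:
  fixes \<sigma> :: "nat \<Rightarrow> 'a \<Rightarrow> real"
  assumes rv: "\<And>i. \<sigma> i \<in> borel_measurable M"
    and indep: "indep_vars (\<lambda>_. borel) \<sigma> UNIV"
    and ident: "\<And>i. distr M borel (\<sigma> i) = distr M borel (\<sigma> 0)"
    and B: "B \<in> sets borel"
  shows "prob {\<omega>\<in>space M. (\<forall>j<i. \<sigma> j \<omega> \<le> x) \<and> \<sigma> i \<omega> \<in> B}
     = (prob (\<sigma> 0 -` {..x} \<inter> space M))^i * prob (\<sigma> 0 -` B \<inter> space M)"
proof -
  have I: "indep_sets (\<lambda>i. { \<sigma> i -` A \<inter> space M | A. A \<in> sets borel}) UNIV"
    using indep unfolding indep_vars_def2 by simp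
  define A where "A j = (if j < i then \<sigma> j -` {..x} \<inter> space M else \<sigma> j -` B \<inter> space M)" for j
  have eq: "{\<omega>\<in>space M. (\<forall>j<i. \<sigma> j \<omega> \<le> x) \<and> \<sigma> i \<omega> \<in> B} = (\<Inter>j\<in>{..<Suc i}. A j)"
  proof (intro set_eqI iffI)
    fix \<omega> assume "\<omega> \<in> (\<Inter>j\<in>{..<Suc i}. A j)"
    then have *: "\<And>j. j < Suc i \<Longrightarrow> \<omega> \<in> A j" by auto
    then show "\<omega> \<in> {\<omega>\<in>space M. (\<forall>j<i. \<sigma> j \<omega> \<le> x) \<and> \<sigma> i \<omega> \<in> B}"
    proof -
      have a: "\<omega> \<in> A i" using * by simp
      have b: "\<sigma> j \<omega> \<le> x" if "j < i" for j using *[of j] that by (simp add: A_def)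
      show ?thesis using a b by (simp add: A_def)
    qed
  qed (auto simp: A_def less_Suc_eq)
  have "prob (\<Inter>j\<in>{..<Suc i}. A j) = (\<Prod>j\<in>{..<Suc i}. prob (A j))"
    by (rule indep_setsD[OF I]) (use B in \<open>auto simp: A_def intro: exI[of _ "{..x}"] exI[of _ B]\<close>)
  also have "\<dots> = (\<Prod>j\<in>{..<i}. prob (A j)) * prob (A i)" by simp
  also have "(\<Prod>j\<in>{..<i}. prob (A j)) = (\<Prod>j\<in>{..<i}. prob (\<sigma> 0 -` {..x} \<inter> space M))"
    by (rule prod.cong) (auto simp: A_def intro!: ident_prob[of \<sigma>, OF rv ident])
  also have "prob (A i) = prob (\<sigma> 0 -` B \<inter> space M)"
    using ident_prob[of \<sigma>, OF rv ident B, of i] by (simp add: A_def)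
  finally show ?thesis by (simp only: eq prod_constant card_lessThan)
qed


theorem lemma3p3:
  fixes M :: "'a measure" and \<sigma> :: "nat \<Rightarrow> 'a \<Rightarrow> real"
    and g k :: "real \<Rightarrow> real"
  assumes prob: "prob_space M"
    and rv: "\<And>i. \<sigma> i \<in> borel_measurable M"
    and indep: "prob_space.indep_vars M (\<lambda>_. borel) \<sigma> UNIV"
    and ident: "\<And>i. distr M borel (\<sigma> i) = distr M borel (\<sigma> 0)"
    and pos: "AE \<omega> in M. \<sigma> 0 \<omega> > 0"
    and slow: "\<And>v. v > 0 \<Longrightarrow>
                 ((\<lambda>u. tailL M (\<sigma> 0) (u * v) / tailL M (\<sigma> 0) u) \<longlongrightarrow> 1) at_top"
    and L_cont: "continuous_on UNIV (tailL M (\<sigma> 0))"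
    and g_lim: "(g \<longlongrightarrow> 0) at_top"
    and g_mono: "\<exists>u0. \<forall>x y. u0 \<le> x \<longrightarrow> x \<le> y \<longrightarrow> g y \<le> g x"
    and k_lim: "\<And>v. v > 0 \<Longrightarrow>
                 ((\<lambda>u. (tailL M (\<sigma> 0) (u * v) / tailL M (\<sigma> 0) u - 1) / g u) \<longlongrightarrow> k v) at_top"
    and k_nontriv: "\<exists>v>0. k v \<noteq> 0 \<and> (\<forall>u>0. k (u * v) \<noteq> k u)"
  shows "\<exists>c>0. \<forall>\<^sub>F x in at_top.
           (\<integral>\<^sup>+ \<omega>. ennreal (1 / \<sigma> (first_exceed \<sigma> x \<omega>) \<omega>) \<partial>M) < ennreal (c * g x / x)"
proof -
  interpret prob_space M by (rule prob)
  have rvm[measurable]: "\<And>i. \<sigma> i \<in> borel_measurable M" by (rule rv)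
  define P where "P u = prob (\<sigma> 0 -` {u<..} \<inter> space M)" for u
  have L_eq: "tailL M (\<sigma> 0) u = 1 / P u" for u
    unfolding tailL_def P_def by (rule arg_cong[where f="\<lambda>A. 1 / prob A"]) auto
  have P_mono: "P w \<le> P u" if "u \<le> w" for u w
    unfolding P_def using that by (intro finite_measure_mono) auto
  have P_nonneg: "P u \<ge> 0" for u unfolding P_def by simp
  have P_le1: "P u \<le> 1" for u unfolding P_def by simp
  have P_pos: "P u > 0" for u
  proof (rule ccontr)
    assume "\<not> P u > 0"
    then have P0: "P u = 0" using P_nonneg[of u] by simp
    have "eventually (\<lambda>w. 0 = tailL M (\<sigma> 0) (w*2) / tailL M (\<sigma> 0) w) at_top"
      unfolding eventually_at_top_linorder
    proof (intro exI[of _ "max u 0"] allI impI)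
      fix w assume "w \<ge> max u 0"
      then have "P w = 0" using P_mono[of u w] P0 P_nonneg[of w] by simp
      then show "0 = tailL M (\<sigma> 0) (w*2) / tailL M (\<sigma> 0) w" by (simp add: L_eq)
    qed
    note ev = this
    have "((\<lambda>w::real. 0::real) \<longlongrightarrow> 1) at_top"
      using tendsto_cong[OF ev, of 1] slow[of 2, OF zero_less_numeral] by (metis (no_types))
    then show False by (simp add: tendsto_const_iff)
  qed
  have prob_le: "prob (\<sigma> 0 -` {..u} \<inter> space M) = 1 - P u" for u
  proof -
    have "\<sigma> 0 -` {..u} \<inter> space M = space M - (\<sigma> 0 -` {u<..} \<inter> space M)" by auto
    then show ?thesis unfolding P_def by (simp add: prob_compl)
  qed
  have prob_int: "prob (\<sigma> 0 -` {u<..w} \<inter> space M) = P u - P w" if "u \<le> w" for u w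
  proof -
    have "\<sigma> 0 -` {u<..w} \<inter> space M = (\<sigma> 0 -` {u<..} \<inter> space M) - (\<sigma> 0 -` {w<..} \<inter> space M)"
      using that by auto
    moreover have "prob ((\<sigma> 0 -` {u<..} \<inter> space M) - (\<sigma> 0 -` {w<..} \<inter> space M))
       = prob (\<sigma> 0 -` {u<..} \<inter> space M) - prob (\<sigma> 0 -` {w<..} \<inter> space M)"
      by (rule finite_measure_Diff) (use that in auto)
    ultimately show ?thesis unfolding P_def by simp
  qed
  obtain u0 where u0: "\<forall>x y. u0 \<le> x \<longrightarrow> x \<le> y \<longrightarrow> g y \<le> g x" using g_mono by blast
  have g_nonneg: "g u \<ge> 0" if "u \<ge> u0" for u
  proof (rule ccontr)
    assume "\<not> g u \<ge> 0"
    then have "g u < 0" by simp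
    from order_tendstoD(1)[OF g_lim this] obtain w0 where "\<forall>w\<ge>w0. g u < g w"
      unfolding eventually_at_top_linorder by blast
    then have "g u < g (max w0 u)" by simp
    moreover have "g (max w0 u) \<le> g u" using u0 that by simp
    ultimately show False by simp
  qed
  have g_pos: "g u > 0" if "u \<ge> u0" for u
  proof (rule ccontr)
    assume "\<not> g u > 0"
    then have gu: "g u = 0" using g_nonneg[OF that] by simp
    obtain v where v: "v > 0" "k v \<noteq> 0" using k_nontriv by blast
    have "eventually (\<lambda>w. 0 = (tailL M (\<sigma> 0) (w * v) / tailL M (\<sigma> 0) w - 1) / g w) at_top"
      unfolding eventually_at_top_linorder
    proof (intro exI[of _ u] allI impI)
      fix w assume "w \<ge> u"
      then have "g w = 0" using u0 that gu g_nonneg[of w] by force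
      then show "0 = (tailL M (\<sigma> 0) (w * v) / tailL M (\<sigma> 0) w - 1) / g w" by simp
    qed
    note ev = this
    have "((\<lambda>w::real. 0::real) \<longlongrightarrow> k v) at_top"
      using tendsto_cong[OF ev, of "k v"] k_lim[OF v(1)] by (metis (no_types))
    then show False using v(2) by (simp add: tendsto_const_iff)
  qed
  define K where "K = \<bar>k 2\<bar> + 1"
  have K_pos: "K > 0" unfolding K_def by simp
  from tendstoD[OF k_lim[of 2] zero_less_one] obtain u1 where
    u1: "\<forall>u\<ge>u1. dist ((tailL M (\<sigma> 0) (u * 2) / tailL M (\<sigma> 0) u - 1) / g u) (k 2) < 1"
    unfolding eventually_at_top_linorder by auto
  have "((\<lambda>u. K * g u) \<longlongrightarrow> K * 0) at_top" by (intro tendsto_intros g_lim)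
  from order_tendstoD(2)[OF this, of 1] obtain u2 where u2: "\<forall>u\<ge>u2. K * g u < 1"
    unfolding eventually_at_top_linorder by auto
  define X0 where "X0 = max (max u0 u1) (max u2 1)"
  have step: "P (u*2) \<ge> P u * (1 - K * g u)" if "u \<ge> X0" for u
  proof -
    have gp: "g u > 0" using g_pos that by (simp add: X0_def)
    have "dist ((tailL M (\<sigma> 0) (u * 2) / tailL M (\<sigma> 0) u - 1) / g u) (k 2) < 1"
      using u1 that by (simp add: X0_def)
    then have "(P u / P (u*2) - 1) / g u < K"
      unfolding K_def dist_real_def L_eq using P_pos[of u] P_pos[of "u*2"] by auto
    then have "P u / P (u*2) - 1 < K * g u" using gp by (simp add: divide_less_eq mult.commute)
    then have A: "P u < P (u*2) * (1 + K * g u)" using P_pos[of "u*2"] by (simp add: divide_less_eq algebra_simps)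
    have "P u * (1 - K * g u) * (1 + K * g u) = P u * (1 - (K * g u)^2)" by (simp add: algebra_simps power2_eq_square)
    also have "\<dots> \<le> P u" using P_nonneg[of u] by (simp add: mult_left_le)
    also have "\<dots> \<le> P (u*2) * (1 + K * g u)" using A by simp
    finally show ?thesis using gp K_pos by (simp add: mult_le_cancel_right_pos add_pos_pos)
  qed
  show ?thesis
  proof (intro exI[of _ "5*K"] conjI)
    show "5 * K > 0" using K_pos by simp
    show "\<forall>\<^sub>F x in at_top. (\<integral>\<^sup>+ \<omega>. ennreal (1 / \<sigma> (first_exceed \<sigma> x \<omega>) \<omega>) \<partial>M) < ennreal (5 * K * g x / x)"
      unfolding eventually_at_top_linorder
    proof (intro exI[of _ X0] allI impI)
      fix x assume xX: "x \<ge> X0"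
      have x_pos: "x > 0" and xu0: "x \<ge> u0" and xu2: "x \<ge> u2" using xX by (auto simp: X0_def)
      define a where "a = K * g x"
      define p where "p = P x"
      have gx: "g x > 0" using g_pos xu0 by simp
      have a_pos: "a > 0" unfolding a_def using K_pos gx by simp
      have a_le: "a \<le> 1" unfolding a_def using u2 xu2 by force
      have p_pos: "p > 0" and p_le: "p \<le> 1" unfolding p_def using P_pos P_le1 by auto
      have powb: "P (x * 2^m) \<ge> p * (1 - a)^m" for m
      proof (induction m)
        case 0 show ?case by (simp add: p_def)
      next
        case (Suc m)
        have ux: "x \<le> x * 2^m" using x_pos by simp
        have uX: "x * 2^m \<ge> X0" using ux xX by linarith
        have "g (x * 2^m) \<le> g x" using u0 xu0 ux by blast
        then have ga: "1 - K * g (x*2^m) \<ge> 1 - a" unfolding a_def using K_pos by (simp add: mult_left_mono)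
        have "p * (1-a)^Suc m = (p * (1-a)^m) * (1 - a)" by simp
        also have "\<dots> \<le> P (x*2^m) * (1-a)" using Suc a_le by (intro mult_right_mono) auto
        also have "\<dots> \<le> P (x*2^m) * (1 - K * g(x*2^m))" using ga P_nonneg by (intro mult_left_mono) auto
        also have "\<dots> \<le> P (x*2^m*2)" using step[OF uX] .
        finally have "p * (1-a)^Suc m \<le> P (x*2^m*2)" .
        moreover have "x*2^m*2 = x*2^Suc m" by simp
        ultimately show ?case by simp
      qed
      have lowb: "P (x * 2^m) \<ge> p * (1 - real m * a)" for m
      proof -
        have "1 + real m * (-a) \<le> (1 + (-a))^m" using a_le by (intro Bernoulli_inequality) simp
        then have "1 - real m * a \<le> (1-a)^m" by simp
        then have "p * (1 - real m * a) \<le> p * (1-a)^m" using p_pos by (intro mult_left_mono) auto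
        then show ?thesis using powb[of m] by linarith
      qed
      have Ev: "prob {\<omega>\<in>space M. (\<forall>j<i. \<sigma> j \<omega> \<le> x) \<and> \<sigma> i \<omega> \<in> B} = (1-p)^i * prob (\<sigma> 0 -` B \<inter> space M)"
        if "B \<in> sets borel" for i B
        using indep_prefix[OF rv indep ident that, of i x] prob_le[of x] by (simp add: p_def)
      define N where "N = {\<omega>\<in>space M. \<forall>i. \<sigma> i \<omega> \<le> x}"
      have N_sets: "N \<in> sets M" unfolding N_def by measurable
      have N_le: "prob N \<le> (1-p)^n" for n
      proof -
        have "N \<subseteq> {\<omega>\<in>space M. (\<forall>j<n. \<sigma> j \<omega> \<le> x) \<and> \<sigma> n \<omega> \<in> UNIV}" unfolding N_def by auto
        then have "prob N \<le> prob {\<omega>\<in>space M. (\<forall>j<n. \<sigma> j \<omega> \<le> x) \<and> \<sigma> n \<omega> \<in> UNIV}"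
          by (intro finite_measure_mono) measurable
        also have "\<dots> = (1-p)^n" using Ev[of UNIV n] prob_space by simp
        finally show ?thesis .
      qed
      have "(\<lambda>n. (1-p)^n) \<longlonglongrightarrow> 0" by (rule LIMSEQ_power_zero) (use p_pos p_le in auto)
      then have "prob N \<le> 0" by (rule LIMSEQ_le_const) (use N_le in auto)
      then have "emeasure M N = 0" using N_sets measure_nonneg[of M N] by (simp add: emeasure_eq_measure)
      then have N_null: "N \<in> null_sets M" using N_sets by (intro null_setsI)
      define S where "S n = (\<Union>i. {\<omega>\<in>space M. (\<forall>j<i. \<sigma> j \<omega> \<le> x) \<and> \<sigma> i \<omega> \<in> {x<..x*2^Suc n}})" for n
      have S_sets[measurable]: "S n \<in> sets M" for n unfolding S_def by measurable
      have S_le: "emeasure M (S n) \<le> ennreal (real (Suc n) * a)" for n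
      proof -
        define c where "c = p - P (x*2^Suc n)"
        have xle: "x \<le> x*2^Suc n" using x_pos mult_left_mono[OF one_le_power[of "2::real" "Suc n"], of x] by simp
        have c: "c \<ge> 0" "c \<le> p * (real (Suc n) * a)"
          using P_mono[OF xle] lowb[of "Suc n"] unfolding c_def p_def by (auto simp: algebra_simps)
        have "emeasure M (S n) \<le> (\<Sum>i. emeasure M {\<omega>\<in>space M. (\<forall>j<i. \<sigma> j \<omega> \<le> x) \<and> \<sigma> i \<omega> \<in> {x<..x*2^Suc n}})"
          unfolding S_def by (rule emeasure_subadditive_countably) auto
        also have "\<dots> = (\<Sum>i. ennreal ((1-p)^i * c))"
          using Ev[of "{x<..x*2^Suc n}"] prob_int[OF xle] by (simp add: emeasure_eq_measure c_def p_def)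
        also have "\<dots> = ennreal (1/p * c)"
        proof (rule suminf_ennreal_eq)
          show "0 \<le> (1-p)^i * c" for i using c p_le by simp
          have "(\<lambda>i. (1-p)^i) sums (1/(1-(1-p)))" by (rule geometric_sums) (use p_pos p_le in auto)
          then show "(\<lambda>i. (1-p)^i * c) sums (1/p * c)" using sums_mult2 by fastforce
        qed
        also have "\<dots> \<le> ennreal (real (Suc n) * a)" using c p_pos by (intro ennreal_leI) (simp add: field_simps)
        finally show ?thesis .
      qed
      define h where "h n \<omega> = ennreal (1/(x*2^n)) * indicator (S n) \<omega>" for n \<omega>
      have pw: "ennreal (1 / \<sigma> (first_exceed \<sigma> x \<omega>) \<omega>) \<le> (\<Sum>n. h n \<omega>)" if "\<omega> \<in> space M" "\<omega> \<notin> N" for \<omega>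
      proof -
        from that obtain i0 where "\<sigma> i0 \<omega> > x" unfolding N_def by (auto simp: not_le)
        then have ex: "\<exists>i. x < \<sigma> i \<omega>" by blast
        define i where "i = first_exceed \<sigma> x \<omega>"
        have hi: "x < \<sigma> i \<omega>" unfolding i_def first_exceed_def by (rule LeastI_ex[OF ex])
        have hj: "\<sigma> j \<omega> \<le> x" if "j < i" for j
          using not_less_Least[OF that[unfolded i_def first_exceed_def]] by simp
        define s where "s = \<sigma> i \<omega>"
        obtain m where m: "s/x < 2^m" using real_arch_pow[of 2 "s/x"] by auto
        have exm: "\<exists>m. s \<le> x*2^m" using m x_pos by (auto simp: field_simps intro: less_imp_le)
        define m0 where "m0 = (LEAST m. s \<le> x*2^m)"
        have m0: "s \<le> x*2^m0" unfolding m0_def by (rule LeastI_ex[OF exm])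
        have "m0 \<noteq> 0"
        proof
          assume "m0 = 0" then show False using m0 hi by (simp add: s_def)
        qed
        then obtain n where n: "m0 = Suc n" by (cases m0) auto
        have "\<not> s \<le> x*2^n" using not_less_Least[of n "\<lambda>m. s \<le> x*2^m"] n unfolding m0_def by simp
        then have sn: "x*2^n < s" by simp
        have inS: "\<omega> \<in> S n" unfolding S_def
          by (rule UN_I[of i]) (use that(1) hj hi m0 n in \<open>auto simp: s_def\<close>)
        have xn: "x*2^n > 0" using x_pos by simp
        have "1/s \<le> 1/(x*2^n)" using sn xn by (intro divide_left_mono) (auto intro: mult_pos_pos)
        then have "ennreal (1/s) \<le> h n \<omega>" unfolding h_def using inS by (simp add: ennreal_leI)
        also have "h n \<omega> \<le> (\<Sum>n. h n \<omega>)" using sum_le_suminf[of "\<lambda>n. h n \<omega>" "{n}"] by (simp add: summableI)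
        finally show ?thesis unfolding s_def i_def .
      qed
      have "(\<integral>\<^sup>+\<omega>. ennreal (1/\<sigma> (first_exceed \<sigma> x \<omega>) \<omega>) \<partial>M) \<le> (\<integral>\<^sup>+\<omega>. (\<Sum>n. h n \<omega>) \<partial>M)"
      proof (rule nn_integral_mono_AE)
        show "AE \<omega> in M. ennreal (1/\<sigma> (first_exceed \<sigma> x \<omega>) \<omega>) \<le> (\<Sum>n. h n \<omega>)"
          using AE_not_in[OF N_null] AE_space by eventually_elim (rule pw)
      qed
      also have "\<dots> = (\<Sum>n. \<integral>\<^sup>+\<omega>. h n \<omega> \<partial>M)" by (rule nn_integral_suminf) (simp add: h_def)
      also have "\<dots> = (\<Sum>n. ennreal (1/(x*2^n)) * emeasure M (S n))"
        unfolding h_def by (simp add: nn_integral_cmult_indicator)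
      also have "\<dots> \<le> (\<Sum>n. ennreal (a/x * (real (Suc n) * (1/2)^n)))"
      proof (rule suminf_le)
        show "ennreal (1/(x*2^n)) * emeasure M (S n) \<le> ennreal (a/x * (real (Suc n) * (1/2)^n))" for n
        proof -
          have "ennreal (1/(x*2^n)) * emeasure M (S n) \<le> ennreal (1/(x*2^n)) * ennreal (real (Suc n) * a)"
            by (rule mult_left_mono[OF S_le]) simp
          also have "\<dots> = ennreal (1/(x*2^n) * (real (Suc n) * a))" by (rule ennreal_mult[symmetric]) (use x_pos a_pos in auto)
          also have "1/(x*2^n) * (real (Suc n) * a) = a/x * (real (Suc n) * (1/2)^n)"
            by (simp add: field_simps power_one_over)
          finally show ?thesis .
        qed
      qed (auto intro: summableI)
      also have "\<dots> = ennreal (a/x * 4)"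
      proof (rule suminf_ennreal_eq)
        show "0 \<le> a/x * (real (Suc n) * (1/2)^n)" for n using a_pos x_pos by simp
        have "(\<lambda>n. of_nat (Suc n) * (1/2::real)^n) sums (1/(1-1/2)^2)" by (rule geometric_deriv_sums) simp
        then have "(\<lambda>n. a/x * (of_nat (Suc n) * (1/2::real)^n)) sums (a/x * (1/(1-1/2)^2))" by (rule sums_mult)
        then show "(\<lambda>n. a/x * (real (Suc n) * (1/2)^n)) sums (a/x * 4)" by (simp add: power2_eq_square)
      qed
      also have "\<dots> < ennreal (5*K*g x / x)" using a_pos x_pos by (intro ennreal_lessI) (auto simp: a_def field_simps)
      finally show "(\<integral>\<^sup>+ \<omega>. ennreal (1 / \<sigma> (first_exceed \<sigma> x \<omega>) \<omega>) \<partial>M) < ennreal (5 * K * g x / x)" .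
    qed
  qed
qed

end
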